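(* Let $R$ be a ring, $X$ a compact metrizable space, $E\subset X$ a non-empty closed subspace with $Y=X\setminus E$ dense in $X$. Two free $(X,Y,E)$-controlled $R$-modules $R\langle A\rangle_\alpha$ and $R\langle B\rangle_\beta$ are isomorphic in the category of free controlled $R$-modules and controlled homomorphisms if and only if (1) the underlying $R$-modules $R\langle A\rangle$ and $R\langle B\rangle$ are isomorphic, and (2) they have the same support, $\alpha(A)'=\beta(B)'$. If the supports are non-empty then condition (1) holds automatically. Moreover, every compact subset $K\subset E$ is the support of some free controlled $R$-module.
   Context: $R\langle A\rangle$ denotes the free right $R$-module with basis $A$; the carrier $\operatorname{carr}(x)\subset A$ of $x\in R\langle A\rangle$ is the finite set of basis elements appearing with nonzero coefficient in $x$. A free controlled $R$-module $R\langle A\rangle_\alpha$ is a free $R$-module $R\langle A\rangle$ together with a function $\alpha\colon A\to Y$ such that $\alpha^{-1}(K)$ is finite for every compact $K\subset Y$. Its support is the derived set $\alpha(A)'$ of $\alpha(A)$ in $X$ (which lies in $E$). A controlled homomorphism $\varphi\colon R\langle A\rangle_\alpha\to R\langle B\rangle_\beta$ is an $R$-module homomorphism such that for every $x\in E$ and every neighbourhood $U$ of $x$ in $X$ there is a neighbourhood $V\subset U$ of $x$ in $X$ with $\beta(\operatorname{carr}(\varphi(a)))\subset U$ for all $a\in A$ with $\alpha(a)\in V$. *)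

theory Defs
  imports "HOL-Analysis.Analysis"
begin

text \<open>The free right R-module R<A> on a set A: finitely supported functions A -> R
  (vanishing outside A). Addition is pointwise, right scalar action is (x r)(a) = x(a) * r.\<close>

definition free_mod :: "'a set \<Rightarrow> ('a \<Rightarrow> 'r::ring_1) set" where
  "free_mod A = {x. {a. x a \<noteq> 0} \<subseteq> A \<and> finite {a. x a \<noteq> 0}}"

definition carr :: "('a \<Rightarrow> 'r::ring_1) \<Rightarrow> 'a set" where
  "carr x = {a. x a \<noteq> 0}"

definition bvec :: "'a \<Rightarrow> ('a \<Rightarrow> 'r::ring_1)" where
  "bvec a = (\<lambda>b. if b = a then 1 else 0)"

definition rlinear :: "'a set \<Rightarrow> 'b set \<Rightarrow> (('a \<Rightarrow> 'r::ring_1) \<Rightarrow> ('b \<Rightarrow> 'r)) \<Rightarrow> bool" where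
  "rlinear A B \<phi> \<longleftrightarrow>
     (\<forall>x\<in>free_mod A. \<phi> x \<in> free_mod B) \<and>
     (\<forall>x\<in>free_mod A. \<forall>y\<in>free_mod A. \<phi> (\<lambda>a. x a + y a) = (\<lambda>b. \<phi> x b + \<phi> y b)) \<and>
     (\<forall>x\<in>free_mod A. \<forall>r. \<phi> (\<lambda>a. x a * r) = (\<lambda>b. \<phi> x b * r))"

definition mod_iso :: "'r::ring_1 itself \<Rightarrow> 'a set \<Rightarrow> 'b set \<Rightarrow> bool" where
  "mod_iso R A B \<longleftrightarrow>
     (\<exists>(\<phi> :: ('a \<Rightarrow> 'r) \<Rightarrow> ('b \<Rightarrow> 'r)) (\<psi> :: ('b \<Rightarrow> 'r) \<Rightarrow> ('a \<Rightarrow> 'r)).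
        rlinear A B \<phi> \<and> rlinear B A \<psi> \<and>
        (\<forall>x\<in>free_mod A. \<psi> (\<phi> x) = x) \<and> (\<forall>y\<in>free_mod B. \<phi> (\<psi> y) = y))"

definition free_controlled :: "'x topology \<Rightarrow> 'x set \<Rightarrow> 'a set \<Rightarrow> ('a \<Rightarrow> 'x) \<Rightarrow> bool" where
  "free_controlled X E A \<alpha> \<longleftrightarrow>
     \<alpha> ` A \<subseteq> topspace X - E \<and>
     (\<forall>K. compactin (subtopology X (topspace X - E)) K \<longrightarrow> finite {a\<in>A. \<alpha> a \<in> K})"

definition fc_support :: "'x topology \<Rightarrow> 'a set \<Rightarrow> ('a \<Rightarrow> 'x) \<Rightarrow> 'x set" where
  "fc_support X A \<alpha> = X derived_set_of (\<alpha> ` A)"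

definition nbhd_in :: "'x topology \<Rightarrow> 'x set \<Rightarrow> 'x \<Rightarrow> bool" where
  "nbhd_in X U x \<longleftrightarrow> U \<subseteq> topspace X \<and> (\<exists>W. openin X W \<and> x \<in> W \<and> W \<subseteq> U)"

definition controlled_hom :: "'x topology \<Rightarrow> 'x set \<Rightarrow> 'a set \<Rightarrow> ('a \<Rightarrow> 'x) \<Rightarrow> 'b set \<Rightarrow> ('b \<Rightarrow> 'x)
     \<Rightarrow> (('a \<Rightarrow> 'r::ring_1) \<Rightarrow> ('b \<Rightarrow> 'r)) \<Rightarrow> bool" where
  "controlled_hom X E A \<alpha> B \<beta> \<phi> \<longleftrightarrow>
     rlinear A B \<phi> \<and>
     (\<forall>x\<in>E. \<forall>U. nbhd_in X U x \<longrightarrow>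
        (\<exists>V. nbhd_in X V x \<and> V \<subseteq> U \<and>
             (\<forall>a\<in>A. \<alpha> a \<in> V \<longrightarrow> \<beta> ` carr (\<phi> (bvec a)) \<subseteq> U)))"

definition controlled_iso :: "'r::ring_1 itself \<Rightarrow> 'x topology \<Rightarrow> 'x set \<Rightarrow> 'a set \<Rightarrow> ('a \<Rightarrow> 'x)
     \<Rightarrow> 'b set \<Rightarrow> ('b \<Rightarrow> 'x) \<Rightarrow> bool" where
  "controlled_iso R X E A \<alpha> B \<beta> \<longleftrightarrow>
     (\<exists>(\<phi> :: ('a \<Rightarrow> 'r) \<Rightarrow> ('b \<Rightarrow> 'r)) (\<psi> :: ('b \<Rightarrow> 'r) \<Rightarrow> ('a \<Rightarrow> 'r)).
        controlled_hom X E A \<alpha> B \<beta> \<phi> \<and> controlled_hom X E B \<beta> A \<alpha> \<psi> \<and>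
        (\<forall>x\<in>free_mod A. \<psi> (\<phi> x) = x) \<and> (\<forall>y\<in>free_mod B. \<phi> (\<psi> y) = y))"

end

theory Submission
  imports Defs
begin

definition pull :: "'a set \<Rightarrow> ('a \<Rightarrow> 'b) \<Rightarrow> ('b \<Rightarrow> 'r::ring_1) \<Rightarrow> ('a \<Rightarrow> 'r)" where
  "pull A k y = (\<lambda>a. if a \<in> A then y (k a) else 0)"

lemma pull_free:
  assumes "bij_betw k A B" "y \<in> free_mod B"
  shows "pull A k y \<in> free_mod A"
proof -
  have "{a. pull A k y a \<noteq> 0} \<subseteq> inv_into A k ` {b. y b \<noteq> 0}"
  proof
    fix a assume "a \<in> {a. pull A k y a \<noteq> 0}"
    then have "a \<in> A" "y (k a) \<noteq> 0" by (auto simp: pull_def split: if_splits)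
    then show "a \<in> inv_into A k ` {b. y b \<noteq> 0}"
      using assms(1) by (metis (mono_tags, lifting) bij_betw_inv_into_left image_eqI mem_Collect_eq)
  qed
  moreover have "finite {b. y b \<noteq> 0}" using assms(2) by (simp add: free_mod_def)
  ultimately have "finite {a. pull A k y a \<noteq> 0}" by (meson finite_imageI finite_subset)
  moreover have "{a. pull A k y a \<noteq> 0} \<subseteq> A" by (auto simp: pull_def)
  ultimately show ?thesis by (simp add: free_mod_def)
qed

lemma pull_rlinear:
  assumes "bij_betw k A B"
  shows "rlinear B A (pull A k :: ('b \<Rightarrow> 'r::ring_1) \<Rightarrow> _)"
  unfolding rlinear_def using pull_free[OF assms] by (auto simp: pull_def fun_eq_iff)

lemma pull_inv:
  assumes "bij_betw h A B" "x \<in> free_mod A"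
  shows "pull A h (pull B (inv_into A h) x) = x"
proof
  fix a
  show "pull A h (pull B (inv_into A h) x) a = x a"
  proof (cases "a \<in> A")
    case True
    then have "h a \<in> B" "inv_into A h (h a) = a"
      using assms(1) by (auto simp: bij_betw_def)
    then show ?thesis using True by (simp add: pull_def)
  next
    case False
    then have "x a = 0" using assms(2) unfolding free_mod_def by blast
    then show ?thesis using False by (simp add: pull_def)
  qed
qed

lemma pull_inv2:
  assumes "bij_betw h A B" "y \<in> free_mod B"
  shows "pull B (inv_into A h) (pull A h y) = y"
proof
  fix b
  show "pull B (inv_into A h) (pull A h y) b = y b"
  proof (cases "b \<in> B")
    case True
    then have "inv_into A h b \<in> A" "h (inv_into A h b) = b"
      using assms(1) by (auto simp: bij_betw_def inv_into_into f_inv_into_f)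
    then show ?thesis using True by (simp add: pull_def)
  next
    case False
    then have "y b = 0" using assms(2) unfolding free_mod_def by blast
    then show ?thesis using False by (simp add: pull_def)
  qed
qed

lemma bij_mod_iso:
  assumes "bij_betw h A B"
  shows "mod_iso TYPE('r::ring_1) A B"
proof -
  have b2: "bij_betw (inv_into A h) B A" using assms by (simp add: bij_betw_inv_into)
  show ?thesis unfolding mod_iso_def
    apply (rule exI[of _ "pull B (inv_into A h) :: ('a \<Rightarrow> 'r) \<Rightarrow> _"])
    apply (rule exI[of _ "pull A h"])
    using pull_rlinear[OF b2] pull_rlinear[OF assms] pull_inv[OF assms] pull_inv2[OF assms] by blast
qed

lemma carr_pull_bvec:
  assumes "b \<in> B" "inj_on k A"
  shows "carr (pull A k (bvec b :: 'b \<Rightarrow> 'r::ring_1)) \<subseteq> {a\<in>A. k a = b}"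
  by (auto simp: carr_def pull_def bvec_def split: if_splits)

theorem SB_explicit:
  fixes f :: "'a \<Rightarrow> 'b" and g :: "'b \<Rightarrow> 'a"
  assumes inj1: "inj_on f A" and sub1: "f ` A \<subseteq> B"
    and inj2: "inj_on g B" and sub2: "g ` B \<subseteq> A"
  shows "\<exists>h. bij_betw h A B \<and> (\<forall>a\<in>A. h a = f a \<or> (h a \<in> B \<and> g (h a) = a))"
proof -
  define X where "X = lfp (\<lambda>X. A - (g ` (B - (f ` X))))"
  define g' where "g' = the_inv_into (B - (f ` X)) g"
  let ?h = "\<lambda>z. if z \<in> X then f z else g' z"
  have X: "X = A - (g ` (B - (f ` X)))"
    unfolding X_def by (rule lfp_unfold) (blast intro: monoI)
  then have X_compl: "A - X = g ` (B - (f ` X))"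
    using sub2 by blast
  from inj2 have inj2': "inj_on g (B - (f ` X))"
    by (rule inj_on_subset) auto
  with X_compl have *: "g' ` (A - X) = B - (f ` X)"
    by (simp add: g'_def)
  from X have X_sub: "X \<subseteq> A" by auto
  from X sub1 have fX_sub: "f ` X \<subseteq> B" by auto
  have im: "?h ` A = B"
  proof -
    from X_sub have "?h ` A = ?h ` (X \<union> (A - X))" by auto
    also have "\<dots> = ?h ` X \<union> ?h ` (A - X)" by (simp only: image_Un)
    also have "?h ` X = f ` X" by auto
    also from * have "?h ` (A - X) = B - (f ` X)" by auto
    also from fX_sub have "f ` X \<union> (B - f ` X) = B" by blast
    finally show ?thesis .
  qed
  have injh: "inj_on ?h A"
  proof -
    from inj1 X_sub have on_X: "inj_on f X"
      by (rule inj_on_subset)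
    have on_X_compl: "inj_on g' (A - X)"
      unfolding g'_def X_compl
      by (rule inj_on_the_inv_into) (rule inj2')
    have impossible: False if eq: "f a = g' b" and a: "a \<in> X" and b: "b \<in> A - X" for a b
    proof -
      from a have fa: "f a \<in> f ` X" by (rule imageI)
      from b have "g' b \<in> g' ` (A - X)" by (rule imageI)
      with * have "g' b \<in> - (f ` X)" by simp
      with eq fa show False by simp
    qed
    show ?thesis
    proof (rule inj_onI)
      fix a b
      assume h: "?h a = ?h b"
      assume "a \<in> A" and "b \<in> A"
      then consider "a \<in> X" "b \<in> X" | "a \<in> A - X" "b \<in> A - X"
        | "a \<in> X" "b \<in> A - X" | "a \<in> A - X" "b \<in> X"
        by blast
      then show "a = b"
      proof cases
        case 1
        with h on_X show ?thesis by (simp add: inj_on_eq_iff)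
      next
        case 2
        with h on_X_compl show ?thesis by (simp add: inj_on_eq_iff)
      next
        case 3
        with h impossible [of a b] have False by simp
        then show ?thesis ..
      next
        case 4
        with h impossible [of b a] have False by simp
        then show ?thesis ..
      qed
    qed
  qed
  have hprop: "\<forall>a\<in>A. ?h a = f a \<or> (?h a \<in> B \<and> g (?h a) = a)"
  proof
    fix a assume a: "a \<in> A"
    show "?h a = f a \<or> (?h a \<in> B \<and> g (?h a) = a)"
    proof (cases "a \<in> X")
      case True then show ?thesis by simp
    next
      case False
      then have aa: "a \<in> g ` (B - f ` X)" using X_compl a by blast
      have "g (g' a) = a" unfolding g'_def
        using aa inj2' by (simp add: f_the_inv_into_f)
      moreover have "g' a \<in> B" using * a False by blast
      ultimately show ?thesis using False by simp
    qed
  qed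
  show ?thesis using im injh hprop bij_betw_def by blast
qed

primrec gseq :: "(nat \<Rightarrow> 'b list \<Rightarrow> 'b) \<Rightarrow> nat \<Rightarrow> 'b list" where
  "gseq c 0 = []"
| "gseq c (Suc n) = gseq c n @ [c n (gseq c n)]"

lemma gseq_length[simp]: "length (gseq c n) = n"
  by (induction n) auto

lemma gseq_nth: "m < n \<Longrightarrow> gseq c n ! m = c m (gseq c m)"
  by (induction n) (auto simp: nth_append less_Suc_eq)

lemma gseq_set: "set (gseq c n) = (\<lambda>m. c m (gseq c m)) ` {..<n}"
  by (induction n) (auto simp: lessThan_Suc)

context Metric_space
begin

lemma fc_into: "free_controlled mtopology E A \<alpha> \<Longrightarrow> a \<in> A \<Longrightarrow> \<alpha> a \<in> M \<and> \<alpha> a \<notin> E"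
  unfolding free_controlled_def by auto

lemma fc_closed_finite:
  assumes "compact_space mtopology" "free_controlled mtopology E A \<alpha>"
    "closedin mtopology C" "C \<inter> E = {}"
  shows "finite {a\<in>A. \<alpha> a \<in> C}"
proof -
  have "compactin mtopology C" using assms(1,3) closedin_compact_space by blast
  moreover have "C \<subseteq> M - E" using assms(3,4) closedin_subset by fastforce
  ultimately have "compactin (subtopology mtopology (topspace mtopology - E)) C"
    by (simp add: compactin_subtopology)
  then show ?thesis using assms(2) unfolding free_controlled_def by blast
qed

lemma fc_countable:
  assumes "compact_space mtopology" "free_controlled mtopology E A \<alpha>" "closedin mtopology E" "E \<noteq> {}"
  shows "countable A"
proof -
  define U where "U n = (\<Union>e\<in>E. mball e (1/(Suc n)))" for n :: nat
  define C where "C n = M - U n" for n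
  have EM: "E \<subseteq> M" using assms(3) closedin_subset by (metis topspace_mtopology)
  have "openin mtopology (U n)" for n unfolding U_def by (intro openin_Union) blast
  then have cl: "closedin mtopology (C n)" for n
    unfolding C_def by (metis closedin_diff closedin_topspace topspace_mtopology)
  have "E \<subseteq> U n" for n
  proof
    fix e assume "e \<in> E"
    moreover then have "e \<in> mball e (1/(Suc n))" using EM by auto
    ultimately show "e \<in> U n" unfolding U_def by blast
  qed
  then have disj: "C n \<inter> E = {}" for n unfolding C_def by blast
  have fin: "finite {a\<in>A. \<alpha> a \<in> C n}" for n
    using fc_closed_finite[OF assms(1,2) cl disj] .
  have "A \<subseteq> (\<Union>n. {a\<in>A. \<alpha> a \<in> C n})"
  proof
    fix a assume a: "a \<in> A"
    then have aM: "\<alpha> a \<in> M" and aE: "\<alpha> a \<notin> E" using assms(2) unfolding free_controlled_def by auto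
    have "openin mtopology (M - E)" using assms(3) by (simp add: closedin_def)
    then obtain r where r: "r > 0" "mball (\<alpha> a) r \<subseteq> M - E"
      using aM aE unfolding openin_mtopology by blast
    obtain n where n: "inverse (real (Suc n)) < r" using reals_Archimedean r(1) by blast
    have "\<alpha> a \<notin> U n"
    proof
      assume "\<alpha> a \<in> U n"
      then obtain e where e: "e \<in> E" "\<alpha> a \<in> mball e (1/(Suc n))" unfolding U_def by blast
      then have "d e (\<alpha> a) < 1/(Suc n)" by simp
      then have "d e (\<alpha> a) < r" using n by (simp add: inverse_eq_divide)
      then have "e \<in> mball (\<alpha> a) r" using aM e EM commute[of e "\<alpha> a"] by auto
      then show False using r e by blast
    qed
    then have "\<alpha> a \<in> C n" using aM unfolding C_def by blast
    then show "a \<in> (\<Union>n. {a\<in>A. \<alpha> a \<in> C n})" using a by blast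
  qed
  moreover have "countable (\<Union>n. {a\<in>A. \<alpha> a \<in> C n})"
    using fin by (intro countable_UN) (auto intro: countable_finite)
  ultimately show ?thesis using countable_subset by blast
qed
end

context Metric_space
begin

lemma fc_support_sub:
  assumes "compact_space mtopology" "free_controlled mtopology E A \<alpha>" "closedin mtopology E"
  shows "mtopology derived_set_of (\<alpha> ` A) \<subseteq> E"


proof
  fix y assume y: "y \<in> mtopology derived_set_of (\<alpha> ` A)"
  then have yM: "y \<in> M" by (metis derived_set_of_subset_topspace subsetD topspace_mtopology)
  show "y \<in> E"
  proof (rule ccontr)
    assume "y \<notin> E"
    moreover have "openin mtopology (M - E)" using assms(3) by (simp add: closedin_def)
    ultimately obtain r where r: "r > 0" "mball y r \<subseteq> M - E" using yM unfolding openin_mtopology by blast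
    have "mcball y (r/2) \<subseteq> mball y r" using r(1) by (intro mcball_subset_mball_concentric) simp
    then have cE: "mcball y (r/2) \<inter> E = {}" using r(2) by blast
    have fin: "finite {a\<in>A. \<alpha> a \<in> mcball y (r/2)}"
      using fc_closed_finite[OF assms(1,2) closedin_mcball cE] .
    have "\<alpha> ` A \<inter> mcball y (r/2) \<subseteq> \<alpha> ` {a\<in>A. \<alpha> a \<in> mcball y (r/2)}" by blast
    then have "finite (\<alpha> ` A \<inter> mcball y (r/2))" using fin finite_subset by blast
    moreover have "\<forall>e>0. infinite (\<alpha> ` A \<inter> mcball y e)"
      using y unfolding derived_set_of_infinite_mcball by blast
    then have "infinite (\<alpha> ` A \<inter> mcball y (r/2))" using r(1) by simp
    ultimately show False by blast
  qed
qed

lemma fc_support_ne: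
  assumes "compact_space mtopology" "free_controlled mtopology E A \<alpha>"
  shows "mtopology derived_set_of (\<alpha> ` A) \<noteq> {} \<longleftrightarrow> infinite A"

proof
  assume "mtopology derived_set_of (\<alpha> ` A) \<noteq> {}"
  then obtain y where y: "y \<in> mtopology derived_set_of (\<alpha> ` A)" by blast
  have "\<forall>e>0. infinite (\<alpha> ` A \<inter> mball y e)" using y unfolding derived_set_of_infinite_mball by blast
  then have "infinite (\<alpha> ` A \<inter> mball y 1)" by simp
  then have "infinite (\<alpha> ` A)" using finite_Int by blast
  then show "infinite A" using finite_imageI by blast
next
  assume iA: "infinite A"
  have sub: "\<alpha> ` A \<subseteq> M" and dis: "\<alpha> ` A \<inter> E = {}"
    using assms(2) unfolding free_controlled_def by auto
  have "infinite (\<alpha> ` A)"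
  proof
    assume fin: "finite (\<alpha> ` A)"
    have "closedin mtopology (\<alpha> ` A)"
      using closedin_Hausdorff_finite[OF Hausdorff_space_mtopology _ fin] sub by simp
    then have "finite {a\<in>A. \<alpha> a \<in> \<alpha> ` A}" using fc_closed_finite[OF assms(1,2) _ dis] by blast
    moreover have "{a\<in>A. \<alpha> a \<in> \<alpha> ` A} = A" by blast
    ultimately show False using iA by simp
  qed
  then show "mtopology derived_set_of (\<alpha> ` A) \<noteq> {}"
    using compact_space_imp_Bolzano_Weierstrass[OF assms(1)] sub by simp
qed

lemma fc_near:
  assumes "compact_space mtopology" "free_controlled mtopology E A \<alpha>" "\<epsilon> > 0"
  shows "finite {a\<in>A. \<forall>l \<in> mtopology derived_set_of (\<alpha> ` A). \<epsilon> \<le> d (\<alpha> a) l}"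
    (is "finite ?N")

proof (rule ccontr)
  assume iN: "infinite ?N"
  have NA: "?N \<subseteq> A" by blast
  have sub: "\<alpha> ` ?N \<subseteq> M" and dis: "\<alpha> ` ?N \<inter> E = {}"
    using assms(2) NA unfolding free_controlled_def by auto
  show False
  proof (cases "finite (\<alpha> ` ?N)")
    case True
    then have "closedin mtopology (\<alpha> ` ?N)"
      using closedin_Hausdorff_finite[OF Hausdorff_space_mtopology _ True] sub by simp
    then have "finite {a\<in>A. \<alpha> a \<in> \<alpha> ` ?N}" using fc_closed_finite[OF assms(1,2) _ dis] by blast
    moreover have "?N \<subseteq> {a\<in>A. \<alpha> a \<in> \<alpha> ` ?N}" by blast
    ultimately show False using iN finite_subset by blast
  next
    case False
    then have "mtopology derived_set_of (\<alpha> ` ?N) \<noteq> {}"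
      using compact_space_imp_Bolzano_Weierstrass[OF assms(1)] sub by simp
    then obtain z where z: "z \<in> mtopology derived_set_of (\<alpha> ` ?N)" by blast
    have "\<alpha> ` ?N \<subseteq> \<alpha> ` A" using NA by blast
    then have zA: "z \<in> mtopology derived_set_of (\<alpha> ` A)"
      using z derived_set_of_mono by blast
    have "\<forall>e>0. infinite (\<alpha> ` ?N \<inter> mball z e)" using z unfolding derived_set_of_infinite_mball by blast
    then have "infinite (\<alpha> ` ?N \<inter> mball z \<epsilon>)" using assms(3) by simp
    then have "\<alpha> ` ?N \<inter> mball z \<epsilon> \<noteq> {}" by force
    then obtain a where a: "a \<in> ?N" "\<alpha> a \<in> mball z \<epsilon>" by blast
    then have "\<epsilon> \<le> d (\<alpha> a) z" using zA by blast
    moreover have "d z (\<alpha> a) < \<epsilon>" using a by simp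
    moreover have "d z (\<alpha> a) = d (\<alpha> a) z" by (rule commute)
    ultimately show False by linarith
  qed
qed

end

context Metric_space
begin

lemma greedy_inj:
  assumes cA: "countable A" and iA: "infinite A"
    and aM: "\<alpha> ` A \<subseteq> M"
    and Lne: "L \<noteq> {}" and Lsub: "L \<subseteq> mtopology derived_set_of (\<beta> ` B)"
    and near: "\<And>\<epsilon>. \<epsilon> > 0 \<Longrightarrow> finite {a\<in>A. \<forall>l\<in>L. \<epsilon> \<le> d (\<alpha> a) l}"
  shows "\<exists>f. inj_on f A \<and> f ` A \<subseteq> B \<and> (\<forall>\<epsilon>>0. finite {a\<in>A. \<epsilon> \<le> d (\<alpha> a) (\<beta> (f a))})"
proof -
  define e where "e = from_nat_into A"
  have be: "bij_betw e UNIV A" unfolding e_def by (rule bij_betw_from_nat_into[OF cA iA])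
  have eA: "e n \<in> A" for n using be bij_betwE by blast
  have einj: "inj e" using be by (simp add: bij_betw_def)
  have erange: "range e = A" using be by (simp add: bij_betw_def)
  have LM: "L \<subseteq> M" using Lsub derived_set_of_subset_topspace[of mtopology "\<beta> ` B"] by simp
  define D where "D p = Inf ((\<lambda>l. d p l) ` L)" for p
  have bdd: "bdd_below ((\<lambda>l. d p l) ` L)" for p by (rule bdd_belowI[of _ 0]) auto
  have Dle: "D p \<le> d p l" if "l \<in> L" for p l unfolding D_def using bdd that by (simp add: cInf_lower)
  define good where "good n used b \<longleftrightarrow> b \<in> B \<and> b \<notin> set used \<and> d (\<alpha> (e n)) (\<beta> b) < D (\<alpha> (e n)) + 1/Suc n"
    for n used b
  have ex: "\<exists>b. good n used b" for n used
  proof -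
    define p where "p = \<alpha> (e n)"
    define \<eta> where "\<eta> = (1 / real (Suc n)) / 2"
    have \<eta>: "\<eta> > 0" unfolding \<eta>_def by simp
    have pM: "p \<in> M" using aM eA p_def by blast
    have "Inf ((\<lambda>l. d p l) ` L) < D p + \<eta>" using \<eta> by (simp add: D_def)
    then have "\<exists>x\<in>(\<lambda>l. d p l) ` L. x < D p + \<eta>"
      using cInf_less_iff[of "(\<lambda>l. d p l) ` L"] bdd Lne by simp
    then obtain l where l: "l \<in> L" "d p l < D p + \<eta>" by blast
    have lM: "l \<in> M" using l LM by blast
    have "\<forall>r>0. infinite (\<beta> ` B \<inter> mball l r)"
      using Lsub l(1) unfolding derived_set_of_infinite_mball by blast
    then have inf1: "infinite (\<beta> ` B \<inter> mball l \<eta>)" using \<eta> by simp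
    have "\<beta> ` B \<inter> mball l \<eta> \<subseteq> \<beta> ` {b\<in>B. \<beta> b \<in> mball l \<eta>}" by blast
    then have "infinite {b\<in>B. \<beta> b \<in> mball l \<eta>}" using inf1 finite_subset finite_imageI by metis
    then have "infinite ({b\<in>B. \<beta> b \<in> mball l \<eta>} - set used)" by simp
    then have "{b\<in>B. \<beta> b \<in> mball l \<eta>} - set used \<noteq> {}" using infinite_imp_nonempty by blast
    then obtain b where b: "b \<in> B" "\<beta> b \<in> mball l \<eta>" "b \<notin> set used" by blast
    have bM': "\<beta> b \<in> M" using b(2) by simp
    have "d p (\<beta> b) \<le> d p l + d l (\<beta> b)" using triangle[OF pM lM bM'] .
    moreover have "d l (\<beta> b) < \<eta>" using b(2) by simp
    moreover have "\<eta> + \<eta> = 1/Suc n" unfolding \<eta>_def by (rule field_sum_of_halves)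
    ultimately have "d p (\<beta> b) < D p + 1/Suc n" using l(2) by linarith
    then show ?thesis unfolding good_def p_def using b by blast
  qed
  define c where "c n used = (SOME b. good n used b)" for n used
  have cg: "good n used (c n used)" for n used unfolding c_def using ex[of n used] by (rule someI_ex)
  define F where "F n = c n (gseq c n)" for n
  have Fg: "good n (gseq c n) (F n)" for n unfolding F_def by (rule cg)
  have injF: "inj F"
  proof (rule injI)
    fix m n assume eq: "F m = F n"
    show "m = n"
    proof (rule ccontr)
      assume "m \<noteq> n"
      then consider "m < n" | "n < m" by linarith
      then show False
      proof cases
        case 1
        then have "F m \<in> set (gseq c n)" unfolding gseq_set F_def by blast
        then show False using Fg[of n] eq unfolding good_def by simp
      next
        case 2
        then have "F n \<in> set (gseq c m)" unfolding gseq_set F_def by blast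
        then show False using Fg[of m] eq unfolding good_def by simp
      qed
    qed
  qed
  define f where "f a = F (inv_into UNIV e a)" for a
  have fe: "f (e n) = F n" for n unfolding f_def using einj by (simp add: inv_into_f_f)
  have injf: "inj_on f A"
  proof (rule inj_onI)
    fix a a' assume a: "a \<in> A" "a' \<in> A" "f a = f a'"
    obtain n where n: "a = e n" using a(1) erange by blast
    obtain n' where n': "a' = e n'" using a(2) erange by blast
    have "F n = F n'" using a(3) n n' fe by simp
    then have "n = n'" using injF by (simp add: inj_eq)
    then show "a = a'" using n n' by simp
  qed
  have fB: "f ` A \<subseteq> B"
  proof
    fix b assume "b \<in> f ` A"
    then obtain a where a: "a \<in> A" "b = f a" by blast
    obtain n where n: "a = e n" using a(1) erange by blast
    show "b \<in> B" using Fg[of n] a n fe unfolding good_def by simp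
  qed
  have close: "finite {a\<in>A. \<epsilon> \<le> d (\<alpha> a) (\<beta> (f a))}" if \<epsilon>: "\<epsilon> > 0" for \<epsilon>
  proof -
    define S where "S = {a\<in>A. \<forall>l\<in>L. \<epsilon>/2 \<le> d (\<alpha> a) l}"
    have finS: "finite S" unfolding S_def using near[of "\<epsilon>/2"] \<epsilon> by simp
    obtain N :: nat where N: "2/\<epsilon> < N" using reals_Archimedean2 by blast
    have "{a\<in>A. \<epsilon> \<le> d (\<alpha> a) (\<beta> (f a))} \<subseteq> S \<union> e ` {..<N}"
    proof
      fix a assume a: "a \<in> {a\<in>A. \<epsilon> \<le> d (\<alpha> a) (\<beta> (f a))}"
      then obtain n where n: "a = e n" using erange by blast
      show "a \<in> S \<union> e ` {..<N}"
      proof (cases "n < N")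
        case True then show ?thesis using n by blast
      next
        case False
        then have "2/\<epsilon> < real (Suc n)" using N by linarith
        then have "2 < \<epsilon> * real (Suc n)" using \<epsilon> by (simp add: divide_less_eq mult.commute)
        then have small: "1/Suc n < \<epsilon>/2" using \<epsilon> by (simp add: field_simps)
        have g: "\<epsilon> \<le> d (\<alpha> (e n)) (\<beta> (F n))" using a n fe by simp
        have "d (\<alpha> (e n)) (\<beta> (F n)) < D (\<alpha> (e n)) + 1/Suc n" using Fg[of n] unfolding good_def by blast
        then have "\<epsilon>/2 < D (\<alpha> (e n))" using g small by linarith
        then have "\<forall>l\<in>L. \<epsilon>/2 \<le> d (\<alpha> a) l" using Dle n by (meson less_le_trans less_imp_le)
        then show ?thesis using a unfolding S_def by blast
      qed
    qed
    moreover have "finite (S \<union> e ` {..<N})" using finS by simp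
    ultimately show ?thesis using finite_subset by blast
  qed
  show ?thesis using injf fB close by blast
qed

end

context Metric_space
begin

lemma close_controlled:
  assumes fc: "free_controlled mtopology E A \<alpha>" and bM: "\<beta> ` B \<subseteq> M"
    and lin: "rlinear A B \<phi>"
    and carr: "\<And>a. a \<in> A \<Longrightarrow> carr (\<phi> (bvec a)) \<subseteq> {h a}"
    and close: "\<And>\<epsilon>. \<epsilon> > 0 \<Longrightarrow> finite {a\<in>A. \<epsilon> \<le> d (\<alpha> a) (\<beta> (h a))}"
    and hB: "h ` A \<subseteq> B"
  shows "controlled_hom mtopology E A \<alpha> B \<beta> \<phi>"
  unfolding controlled_hom_def
proof (intro conjI lin ballI allI impI)
  fix x U assume x: "x \<in> E" and U: "nbhd_in mtopology U x"
  obtain W where W: "openin mtopology W" "x \<in> W" "W \<subseteq> U" using U unfolding nbhd_in_def by blast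
  have xM: "x \<in> M" using W by (metis openin_subset subsetD topspace_mtopology)
  obtain r where r: "r > 0" "mball x r \<subseteq> W" using W(1,2) unfolding openin_mtopology by blast
  define F where "F = {a\<in>A. r/2 \<le> d (\<alpha> a) (\<beta> (h a))}"
  have finF: "finite F" unfolding F_def using close[of "r/2"] r(1) by simp
  have aM: "\<alpha> ` F \<subseteq> M" and aE: "\<alpha> ` F \<inter> E = {}"
    using fc unfolding free_controlled_def F_def by auto
  have clF: "closedin mtopology (\<alpha> ` F)"
    using closedin_Hausdorff_finite[of mtopology "\<alpha> ` F"] Hausdorff_space_mtopology aM finF by simp
  define V where "V = mball x (r/2) - \<alpha> ` F"
  have Vo: "openin mtopology V" unfolding V_def using clF by (simp add: openin_diff)
  have xV: "x \<in> V" unfolding V_def using xM r(1) aE x by auto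
  have VW: "V \<subseteq> W" unfolding V_def using r(2) mball_subset_concentric[of "r/2" r x] r(1) by auto
  show "\<exists>V. nbhd_in mtopology V x \<and> V \<subseteq> U \<and> (\<forall>a\<in>A. \<alpha> a \<in> V \<longrightarrow> \<beta> ` carr (\<phi> (bvec a)) \<subseteq> U)"
  proof (intro exI conjI ballI impI)
    show "nbhd_in mtopology V x" unfolding nbhd_in_def using Vo xV openin_subset by blast
    show "V \<subseteq> U" using VW W(3) by blast
    fix a assume a: "a \<in> A" "\<alpha> a \<in> V"
    then have aF: "a \<notin> F" unfolding V_def by blast
    then have d1: "d (\<alpha> a) (\<beta> (h a)) < r/2" using a(1) unfolding F_def by simp
    have d2: "d x (\<alpha> a) < r/2" and aM': "\<alpha> a \<in> M" using a(2) unfolding V_def by auto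
    have hM: "\<beta> (h a) \<in> M" using hB bM a(1) by blast
    have "d x (\<beta> (h a)) \<le> d x (\<alpha> a) + d (\<alpha> a) (\<beta> (h a))" using triangle[OF xM aM' hM] .
    then have "d x (\<beta> (h a)) < r" using d1 d2 by linarith
    then have "\<beta> (h a) \<in> W" using r(2) xM hM by auto
    then show "\<beta> ` carr (\<phi> (bvec a)) \<subseteq> U" using carr[OF a(1)] W(3) by blast
  qed
qed

lemma finite_controlled:
  assumes fc: "free_controlled mtopology E A \<alpha>" and fin: "finite A"
    and lin: "rlinear A B \<phi>"
  shows "controlled_hom mtopology E A \<alpha> B \<beta> \<phi>"
  unfolding controlled_hom_def
proof (intro conjI lin ballI allI impI)
  fix x U assume x: "x \<in> E" and U: "nbhd_in mtopology U x"
  obtain W where W: "openin mtopology W" "x \<in> W" "W \<subseteq> U" using U unfolding nbhd_in_def by blast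
  have aM: "\<alpha> ` A \<subseteq> M" and aE: "\<alpha> ` A \<inter> E = {}"
    using fc unfolding free_controlled_def by auto
  have clF: "closedin mtopology (\<alpha> ` A)"
    using closedin_Hausdorff_finite[of mtopology "\<alpha> ` A"] Hausdorff_space_mtopology aM fin by simp
  define V where "V = W - \<alpha> ` A"
  have Vo: "openin mtopology V" unfolding V_def using clF W(1) by (simp add: openin_diff)
  have xV: "x \<in> V" unfolding V_def using W(2) aE x by auto
  show "\<exists>V. nbhd_in mtopology V x \<and> V \<subseteq> U \<and> (\<forall>a\<in>A. \<alpha> a \<in> V \<longrightarrow> \<beta> ` carr (\<phi> (bvec a)) \<subseteq> U)"
  proof (intro exI conjI ballI impI)
    show "nbhd_in mtopology V x" unfolding nbhd_in_def using Vo xV openin_subset by blast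
    show "V \<subseteq> U" using W(3) unfolding V_def by blast
    fix a assume a: "a \<in> A" "\<alpha> a \<in> V"
    then show "\<beta> ` carr (\<phi> (bvec a)) \<subseteq> U" unfolding V_def by blast
  qed
qed

lemma bvec_free: "a \<in> A \<Longrightarrow> (bvec a :: 'i \<Rightarrow> 'r::ring_1) \<in> free_mod A"
proof -
  assume a: "a \<in> A"
  have "{b. (bvec a :: 'i \<Rightarrow> 'r) b \<noteq> 0} = {a}" by (auto simp: bvec_def)
  then show ?thesis using a unfolding free_mod_def by simp
qed

lemma iso_support_sub:
  assumes cs: "compact_space mtopology" and cE: "closedin mtopology E"
    and fcA: "free_controlled mtopology E A \<alpha>" and fcB: "free_controlled mtopology E B \<beta>"
    and ch: "controlled_hom mtopology E A \<alpha> B \<beta> (\<phi> :: ('i \<Rightarrow> 'r::ring_1) \<Rightarrow> ('j \<Rightarrow> 'r))"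
    and lin: "rlinear B A \<psi>"
    and inv: "\<forall>x\<in>free_mod A. \<psi> (\<phi> x) = x"
  shows "mtopology derived_set_of (\<alpha> ` A) \<subseteq> mtopology derived_set_of (\<beta> ` B)"
proof
  fix x assume xA: "x \<in> mtopology derived_set_of (\<alpha> ` A)"
  have xE: "x \<in> E" using fc_support_sub[OF cs fcA cE] xA by blast
  have xM: "x \<in> M" using xA by (metis derived_set_of_subset_topspace subsetD topspace_mtopology)
  have bM: "\<beta> ` B \<subseteq> M" and bE: "\<beta> ` B \<inter> E = {}"
    using fcB unfolding free_controlled_def by auto
  show "x \<in> mtopology derived_set_of (\<beta> ` B)"
  proof (rule ccontr)
    assume nx: "x \<notin> mtopology derived_set_of (\<beta> ` B)"
    have eq: "mtopology derived_set_of (\<beta> ` B) = {x \<in> M. \<forall>e>0. infinite (\<beta> ` B \<inter> mball x e)}"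
      by (rule derived_set_of_infinite_mball)
    have "\<exists>e>0. finite (\<beta> ` B \<inter> mball x e)"
    proof (rule ccontr)
      assume "\<not> (\<exists>e>0. finite (\<beta> ` B \<inter> mball x e))"
      then have "x \<in> {x \<in> M. \<forall>e>0. infinite (\<beta> ` B \<inter> mball x e)}" using xM by simp
      then show False using nx eq by simp
    qed
    then obtain r where r: "r > 0" "finite (\<beta> ` B \<inter> mball x r)" by blast
    define U where "U = mball x r - (\<beta> ` B \<inter> mball x r)"
    have cl: "closedin mtopology (\<beta> ` B \<inter> mball x r)"
    proof -
      have "\<beta> ` B \<inter> mball x r \<subseteq> topspace mtopology" using bM by auto
      then show ?thesis by (rule closedin_Hausdorff_finite[OF Hausdorff_space_mtopology _ r(2)])
    qed
    have Uo: "openin mtopology U" unfolding U_def using cl by (simp add: openin_diff)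
    have "x \<notin> \<beta> ` B" using xE bE by blast
    then have xU: "x \<in> U" unfolding U_def using xM r(1) by simp
    have Ub: "\<beta> ` B \<inter> U = {}" unfolding U_def by blast
    have "nbhd_in mtopology U x" unfolding nbhd_in_def using Uo xU openin_subset by blast
    then obtain V where V: "nbhd_in mtopology V x" "V \<subseteq> U"
      "\<forall>a\<in>A. \<alpha> a \<in> V \<longrightarrow> \<beta> ` carr (\<phi> (bvec a)) \<subseteq> U"
      using ch xE unfolding controlled_hom_def by blast
    obtain W where W: "openin mtopology W" "x \<in> W" "W \<subseteq> V" using V(1) unfolding nbhd_in_def by blast
    have "\<forall>T. x \<in> T \<and> openin mtopology T \<longrightarrow> (\<exists>y\<noteq>x. y \<in> \<alpha> ` A \<and> y \<in> T)"
      using xA unfolding derived_set_of_def by blast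
    then obtain a where a: "a \<in> A" "\<alpha> a \<in> W" using W(1,2) by blast
    then have sub: "\<beta> ` carr (\<phi> (bvec a)) \<subseteq> U" using V(3) W(3) by blast
    have ba: "(bvec a :: 'i \<Rightarrow> 'r) \<in> free_mod A" using a(1) by (rule bvec_free)
    have "\<phi> (bvec a) \<in> free_mod B" using ch ba unfolding controlled_hom_def rlinear_def by blast
    then have "carr (\<phi> (bvec a)) \<subseteq> B" unfolding free_mod_def carr_def by blast
    then have "carr (\<phi> (bvec a)) = {}" using sub Ub by blast
    then have z: "\<phi> (bvec a) = (\<lambda>_. 0)" unfolding carr_def by auto
    have zB: "(\<lambda>_. 0 :: 'r) \<in> free_mod B" unfolding free_mod_def by simp
    have sc: "\<forall>x\<in>free_mod B. \<forall>r. \<psi> (\<lambda>a. x a * r) = (\<lambda>b. \<psi> x b * r)"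
      using lin unfolding rlinear_def by blast
    have "\<psi> (\<lambda>_. 0 :: 'r) = (\<lambda>_. 0)" using sc[rule_format, OF zB, of 0] by simp
    then have "(bvec a :: 'i \<Rightarrow> 'r) = (\<lambda>_. 0)" using inv ba z by metis
    then have "(bvec a :: 'i \<Rightarrow> 'r) a = 0" by simp
    then show False by (simp add: bvec_def)
  qed
qed

end

context Metric_space
begin

lemma acc_in_K:
  assumes Kc: "closedin mtopology K" and kK: "\<And>n. k n \<in> K" and yM: "\<And>n. y n \<in> M"
    and dk: "\<And>n. d (k n) (y n) < 1 / Suc n"
    and zM: "z \<in> M" and hz: "\<And>r N0. r > 0 \<Longrightarrow> \<exists>n\<ge>N0. d z (y n) < r"
  shows "z \<in> K"
proof -
  have KM: "K \<subseteq> M" using Kc closedin_subset by (metis topspace_mtopology)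
  have "\<forall>r>0. \<exists>w\<in>K. w \<in> mball z r"
  proof (intro allI impI)
    fix r :: real assume r: "r > 0"
    have r2: "r/2 > 0" using r by simp
    obtain N0 :: nat where N0: "inverse (real (Suc N0)) < r/2" using reals_Archimedean[OF r2] by blast
    obtain n where n: "n \<ge> N0" "d z (y n) < r/2" using hz[OF r2, of N0] by blast
    have "1 / real (Suc n) \<le> 1 / real (Suc N0)" using n(1) by (intro divide_left_mono) auto
    then have s: "1/Suc n < r/2" using N0 by (simp add: inverse_eq_divide)
    have kM: "k n \<in> M" using kK KM by blast
    have "d z (k n) \<le> d z (y n) + d (y n) (k n)" using triangle[OF zM yM kM] .
    moreover have "d (y n) (k n) = d (k n) (y n)" by (rule commute)
    ultimately have "d z (k n) < r" using n(2) s dk[of n] by linarith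
    then have "k n \<in> mball z r" using kM zM by simp
    then show "\<exists>w\<in>K. w \<in> mball z r" using kK[of n] by blast
  qed
  then have "z \<in> mtopology closure_of K" unfolding metric_closure_of using zM by blast
  then show ?thesis using Kc by (simp add: closure_of_closedin)
qed

lemma support_realize:
  assumes cs: "compact_space mtopology" and cE: "closedin mtopology E"
    and dense: "mtopology closure_of (M - E) = M"
    and K: "compactin mtopology K" "K \<subseteq> E"
  shows "\<exists>(A' :: nat set) \<alpha>'. free_controlled mtopology E A' \<alpha>' \<and> mtopology derived_set_of (\<alpha>' ` A') = K"
proof (cases "K = {}")
  case True
  have "free_controlled mtopology E {} (\<lambda>_::nat. undefined)" unfolding free_controlled_def by simp
  then show ?thesis using True by (intro exI[of _ "{}"] exI[of _ "\<lambda>_::nat. undefined"]) simp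
next
  case False
  have Kc: "closedin mtopology K" using K(1) compactin_imp_closedin Hausdorff_space_mtopology by blast
  have KM: "K \<subseteq> M" using Kc closedin_subset by (metis topspace_mtopology)
  have tb: "mtotally_bounded K" using K(1) by (rule compactin_imp_mtotally_bounded)
  have "\<forall>n::nat. \<exists>F. finite F \<and> F \<subseteq> K \<and> K \<subseteq> (\<Union>x\<in>F. mball x (1/Suc n))"
  proof
    fix n :: nat
    have "(1::real)/Suc n > 0" by simp
    then show "\<exists>F. finite F \<and> F \<subseteq> K \<and> K \<subseteq> (\<Union>x\<in>F. mball x (1/Suc n))"
      using tb unfolding mtotally_bounded_def by blast
  qed
  then obtain net where net: "\<And>n. finite (net n)" "\<And>n. net n \<subseteq> K"
    "\<And>n. K \<subseteq> (\<Union>x\<in>net n. mball x (1/Suc n))"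
    by metis
  define D where "D = (\<Union>n. net n)"
  have cD: "countable D" unfolding D_def using net(1) by (intro countable_UN) (auto intro: countable_finite)
  have DK: "D \<subseteq> K" unfolding D_def using net(2) by blast
  have Ddense: "\<exists>x\<in>D. d z x < r" if zK: "z \<in> K" and r: "r > 0" for z r
  proof -
    obtain n :: nat where n: "inverse (real (Suc n)) < r" using reals_Archimedean[OF r] by blast
    obtain x where x: "x \<in> net n" "z \<in> mball x (1/Suc n)" using net(3)[of n] zK by blast
    have "d x z < 1/Suc n" using x(2) by simp
    then have "d z x < r" using n commute[of z x] by (simp add: inverse_eq_divide)
    then show ?thesis using x(1) unfolding D_def by blast
  qed
  have Dne: "D \<noteq> {}"
  proof -
    obtain z where "z \<in> K" using False by blast
    then show ?thesis using Ddense[of z 1] by auto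
  qed
  define k where "k i = from_nat_into D (fst (prod_decode i))" for i
  have kK: "k i \<in> K" for i using from_nat_into[OF Dne] DK unfolding k_def by blast
  have kM: "k i \<in> M" for i using kK KM by blast
  have "\<exists>w. w \<in> M - E \<and> d (k i) w < 1/Suc i" for i
  proof -
    have "k i \<in> mtopology closure_of (M - E)" using dense kM by simp
    then have all: "\<forall>r>0. \<exists>w\<in>M - E. w \<in> mball (k i) r" unfolding metric_closure_of by blast
    have "(1::real)/Suc i > 0" by simp
    then obtain w where "w \<in> M - E" "w \<in> mball (k i) (1/Suc i)" using all by blast
    then show ?thesis by auto
  qed
  then obtain y where y: "\<And>i. y i \<in> M - E" "\<And>i. d (k i) (y i) < 1/Suc i" by metis
  have yM: "y i \<in> M" for i using y(1) by blast
  have acc: "z \<in> K" if "z \<in> M" "\<And>r N0. r > 0 \<Longrightarrow> \<exists>n\<ge>N0. d z (y n) < r" for z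
    using acc_in_K[OF Kc kK yM y(2) that] .
  have fc: "free_controlled mtopology E UNIV y"
    unfolding free_controlled_def
  proof (intro conjI allI impI)
    show "y ` UNIV \<subseteq> topspace mtopology - E" using y(1) by auto
    fix C assume "compactin (subtopology mtopology (topspace mtopology - E)) C"
    then have C: "compactin mtopology C" "C \<subseteq> M - E" by (simp_all add: compactin_subtopology)
    show "finite {a \<in> UNIV. y a \<in> C}"
    proof (rule ccontr)
      let ?N = "{a \<in> UNIV. y a \<in> C}"
      assume iN: "infinite ?N"
      obtain z where z: "z \<in> C" "z \<in> M" "\<And>r N0. r > 0 \<Longrightarrow> \<exists>n\<ge>N0. d z (y n) < r"
      proof (cases "finite (y ` ?N)")
        case True
        then obtain n0 where n0: "n0 \<in> ?N" "infinite {n \<in> ?N. y n = y n0}"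
          using pigeonhole_infinite[OF iN] by blast
        show ?thesis
        proof (rule that[of "y n0"])
          show "y n0 \<in> C" using n0 by simp
          show "y n0 \<in> M" by (rule yM)
          fix r :: real and N0 :: nat assume r: "r > 0"
          obtain n where n: "n \<in> {n \<in> ?N. y n = y n0}" "n \<ge> N0"
            using n0(2) infinite_nat_iff_unbounded_le by blast
          then have "d (y n0) (y n) = 0" using yM by simp
          then show "\<exists>n\<ge>N0. d (y n0) (y n) < r" using r n(2) by auto
        qed
      next
        case False
        have sub: "y ` ?N \<subseteq> C" by blast
        have "C \<inter> mtopology derived_set_of (y ` ?N) \<noteq> {}"
          using compactin_imp_Bolzano_Weierstrass[OF C(1)] False sub by blast
        then obtain z where z: "z \<in> C" "z \<in> mtopology derived_set_of (y ` ?N)" by blast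
        have zM: "z \<in> M" using z(1) C(2) by blast
        have inf: "\<forall>e>0. infinite (y ` ?N \<inter> mball z e)"
          using z(2) unfolding derived_set_of_infinite_mball by blast
        show ?thesis
        proof (rule that[OF z(1) zM])
          fix r :: real and N0 :: nat assume r: "r > 0"
          have "infinite (y ` ?N \<inter> mball z r)" using inf r by blast
          moreover have "y ` ?N \<inter> mball z r \<subseteq> y ` {n. y n \<in> mball z r}" by blast
          ultimately have "infinite {n. y n \<in> mball z r}" using finite_subset finite_imageI by metis
          then obtain n where "n \<in> {n. y n \<in> mball z r}" "n \<ge> N0"
            using infinite_nat_iff_unbounded_le by blast
          then show "\<exists>n\<ge>N0. d z (y n) < r" by auto
        qed
      qed
      then have "z \<in> K" using acc by blast
      then show False using z(1) C(2) K(2) by blast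
    qed
  qed
  have supp1: "mtopology derived_set_of (range y) \<subseteq> K"
  proof
    fix z assume z: "z \<in> mtopology derived_set_of (range y)"
    have zM: "z \<in> M" using z by (metis derived_set_of_subset_topspace subsetD topspace_mtopology)
    have inf: "\<forall>e>0. infinite (range y \<inter> mball z e)"
      using z unfolding derived_set_of_infinite_mball by blast
    show "z \<in> K"
    proof (rule acc[OF zM])
      fix r :: real and N0 :: nat assume r: "r > 0"
      have "infinite (range y \<inter> mball z r)" using inf r by blast
      moreover have "range y \<inter> mball z r \<subseteq> y ` {n. y n \<in> mball z r}" by blast
      ultimately have "infinite {n. y n \<in> mball z r}" using finite_subset finite_imageI by metis
      then obtain n where "n \<in> {n. y n \<in> mball z r}" "n \<ge> N0"
        using infinite_nat_iff_unbounded_le by blast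
      then show "\<exists>n\<ge>N0. d z (y n) < r" by auto
    qed
  qed
  have supp2: "K \<subseteq> mtopology derived_set_of (range y)"
  proof
    fix z assume zK: "z \<in> K"
    have zM: "z \<in> M" using zK KM by blast
    have zE: "z \<in> E" using zK K(2) by blast
    have "\<forall>T. z \<in> T \<and> openin mtopology T \<longrightarrow> (\<exists>w\<noteq>z. w \<in> range y \<and> w \<in> T)"
    proof (intro allI impI)
      fix T assume T: "z \<in> T \<and> openin mtopology T"
      obtain r where r: "r > 0" "mball z r \<subseteq> T" using T unfolding openin_mtopology by blast
      have r2: "r/2 > 0" using r(1) by simp
      obtain x where x: "x \<in> D" "d z x < r/2" using Ddense[OF zK r2] by blast
      obtain j where j: "x = from_nat_into D j" using x(1) cD by (metis from_nat_into_surj)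
      obtain N0 :: nat where N0: "inverse (real (Suc N0)) < r/2" using reals_Archimedean[OF r2] by blast
      define i where "i = prod_encode (j, N0)"
      have ki: "k i = x" unfolding k_def i_def j by simp
      have iN: "N0 \<le> i" unfolding i_def by (rule le_prod_encode_2)
      have "1 / real (Suc i) \<le> 1 / real (Suc N0)" using iN by (intro divide_left_mono) auto
      then have s: "1/Suc i < r/2" using N0 by (simp add: inverse_eq_divide)
      have xM: "x \<in> M" using x(1) DK KM by blast
      have "d z (y i) \<le> d z x + d x (y i)" using triangle[OF zM xM yM] .
      moreover have "d x (y i) < 1/Suc i" using y(2)[of i] ki by simp
      ultimately have "d z (y i) < r" using x(2) s by linarith
      then have "y i \<in> T" using r(2) zM yM[of i] by auto
      moreover have "y i \<noteq> z" using y(1)[of i] zE by blast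
      ultimately show "\<exists>w\<noteq>z. w \<in> range y \<and> w \<in> T" by blast
    qed
    then show "z \<in> mtopology derived_set_of (range y)"
      unfolding in_derived_set_of topspace_mtopology using zM by blast
  qed
  show ?thesis using fc supp1 supp2 by blast
qed

end

lemma countable_bij:
  assumes "countable A" "infinite A" "countable B" "infinite B"
  shows "\<exists>h. bij_betw h A B"

proof -
  have a: "bij_betw (from_nat_into A) UNIV A" by (rule bij_betw_from_nat_into[OF assms(1,2)])
  have b: "bij_betw (from_nat_into B) UNIV B" by (rule bij_betw_from_nat_into[OF assms(3,4)])
  have "bij_betw (from_nat_into B \<circ> inv_into UNIV (from_nat_into A)) A B"
    using bij_betw_trans[OF bij_betw_inv_into[OF a] b] .
  then show ?thesis by blast
qed

context Metric_space
begin

lemma main_metric: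
  fixes A :: "'i set" and \<alpha> :: "'i \<Rightarrow> 'a" and B :: "'j set" and \<beta> :: "'j \<Rightarrow> 'a"
  assumes cs: "compact_space mtopology"
    and cE: "closedin mtopology E" and Ene: "E \<noteq> {}"
    and dense: "mtopology closure_of (topspace mtopology - E) = topspace mtopology"
    and fcA: "free_controlled mtopology E A \<alpha>" and fcB: "free_controlled mtopology E B \<beta>"
  shows "(controlled_iso TYPE('r::ring_1) mtopology E A \<alpha> B \<beta> \<longleftrightarrow>
            mod_iso TYPE('r) A B \<and> fc_support mtopology A \<alpha> = fc_support mtopology B \<beta>)
       \<and> (fc_support mtopology A \<alpha> \<noteq> {} \<and> fc_support mtopology B \<beta> \<noteq> {} \<longrightarrow> mod_iso TYPE('r) A B)
       \<and> (\<forall>K. compactin mtopology K \<and> K \<subseteq> E \<longrightarrow>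
            (\<exists>(A' :: nat set) \<alpha>'. free_controlled mtopology E A' \<alpha>' \<and> fc_support mtopology A' \<alpha>' = K))"

proof (intro conjI)
  have dense': "mtopology closure_of (M - E) = M" using dense by simp
  show "\<forall>K. compactin mtopology K \<and> K \<subseteq> E \<longrightarrow>
            (\<exists>(A' :: nat set) \<alpha>'. free_controlled mtopology E A' \<alpha>' \<and> fc_support mtopology A' \<alpha>' = K)"
    unfolding fc_support_def using support_realize[OF cs cE dense'] by blast
  have cA: "countable A" by (rule fc_countable[OF cs fcA cE Ene])
  have cB: "countable B" by (rule fc_countable[OF cs fcB cE Ene])
  show "fc_support mtopology A \<alpha> \<noteq> {} \<and> fc_support mtopology B \<beta> \<noteq> {} \<longrightarrow> mod_iso TYPE('r) A B"
  proof
    assume "fc_support mtopology A \<alpha> \<noteq> {} \<and> fc_support mtopology B \<beta> \<noteq> {}"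
    then have "infinite A" "infinite B" using fc_support_ne[OF cs fcA] fc_support_ne[OF cs fcB]
      unfolding fc_support_def by blast+
    then obtain h where "bij_betw h A B" using countable_bij cA cB by blast
    then show "mod_iso TYPE('r) A B" by (rule bij_mod_iso)
  qed
  show "controlled_iso TYPE('r::ring_1) mtopology E A \<alpha> B \<beta> \<longleftrightarrow>
            mod_iso TYPE('r) A B \<and> fc_support mtopology A \<alpha> = fc_support mtopology B \<beta>"
  proof
    assume "controlled_iso TYPE('r::ring_1) mtopology E A \<alpha> B \<beta>"
    then obtain \<phi> :: "('i \<Rightarrow> 'r) \<Rightarrow> ('j \<Rightarrow> 'r)" and \<psi> where
      ch1: "controlled_hom mtopology E A \<alpha> B \<beta> \<phi>" and ch2: "controlled_hom mtopology E B \<beta> A \<alpha> \<psi>"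
      and i1: "\<forall>x\<in>free_mod A. \<psi> (\<phi> x) = x" and i2: "\<forall>y\<in>free_mod B. \<phi> (\<psi> y) = y"
      unfolding controlled_iso_def by blast
    have l1: "rlinear A B \<phi>" and l2: "rlinear B A \<psi>" using ch1 ch2 unfolding controlled_hom_def by blast+
    have "mod_iso TYPE('r) A B" unfolding mod_iso_def using l1 l2 i1 i2 by blast
    moreover have "fc_support mtopology A \<alpha> \<subseteq> fc_support mtopology B \<beta>"
      unfolding fc_support_def by (rule iso_support_sub[OF cs cE fcA fcB ch1 l2 i1])
    moreover have "fc_support mtopology B \<beta> \<subseteq> fc_support mtopology A \<alpha>"
      unfolding fc_support_def by (rule iso_support_sub[OF cs cE fcB fcA ch2 l1 i2])
    ultimately show "mod_iso TYPE('r) A B \<and> fc_support mtopology A \<alpha> = fc_support mtopology B \<beta>" by blast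
  next
    assume asm: "mod_iso TYPE('r) A B \<and> fc_support mtopology A \<alpha> = fc_support mtopology B \<beta>"
    define L where "L = mtopology derived_set_of (\<alpha> ` A)"
    have LB: "L = mtopology derived_set_of (\<beta> ` B)" using asm unfolding L_def fc_support_def by simp
    have aM: "\<alpha> ` A \<subseteq> M" using fcA unfolding free_controlled_def by auto
    have bM: "\<beta> ` B \<subseteq> M" using fcB unfolding free_controlled_def by auto
    show "controlled_iso TYPE('r::ring_1) mtopology E A \<alpha> B \<beta>"
    proof (cases "L = {}")
      case True
      then have fA: "finite A" and fB: "finite B"
        using fc_support_ne[OF cs fcA] fc_support_ne[OF cs fcB] LB unfolding L_def by auto
      obtain \<phi> :: "('i \<Rightarrow> 'r) \<Rightarrow> ('j \<Rightarrow> 'r)" and \<psi> where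
        l1: "rlinear A B \<phi>" and l2: "rlinear B A \<psi>"
        and i1: "\<forall>x\<in>free_mod A. \<psi> (\<phi> x) = x" and i2: "\<forall>y\<in>free_mod B. \<phi> (\<psi> y) = y"
        using asm unfolding mod_iso_def by blast
      have "controlled_hom mtopology E A \<alpha> B \<beta> \<phi>" by (rule finite_controlled[OF fcA fA l1])
      moreover have "controlled_hom mtopology E B \<beta> A \<alpha> \<psi>" by (rule finite_controlled[OF fcB fB l2])
      ultimately show ?thesis unfolding controlled_iso_def using i1 i2 by blast
    next
      case False
      then have iA: "infinite A" and iB: "infinite B"
        using fc_support_ne[OF cs fcA] fc_support_ne[OF cs fcB] LB unfolding L_def by auto
      have nearA: "finite {a\<in>A. \<forall>l\<in>L. \<epsilon> \<le> d (\<alpha> a) l}" if "\<epsilon> > 0" for \<epsilon>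
        unfolding L_def by (rule fc_near[OF cs fcA that])
      have nearB: "finite {b\<in>B. \<forall>l\<in>L. \<epsilon> \<le> d (\<beta> b) l}" if "\<epsilon> > 0" for \<epsilon>
        unfolding LB by (rule fc_near[OF cs fcB that])
      obtain f where f: "inj_on f A" "f ` A \<subseteq> B" "\<And>\<epsilon>. \<epsilon>>0 \<Longrightarrow> finite {a\<in>A. \<epsilon> \<le> d (\<alpha> a) (\<beta> (f a))}"
        using greedy_inj[OF cA iA aM False _ nearA, of \<beta> B] LB by blast
      obtain g where g: "inj_on g B" "g ` B \<subseteq> A" "\<And>\<epsilon>. \<epsilon>>0 \<Longrightarrow> finite {b\<in>B. \<epsilon> \<le> d (\<beta> b) (\<alpha> (g b))}"
        using greedy_inj[OF cB iB bM False _ nearB, of \<alpha> A] unfolding L_def by blast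
      obtain h where h: "bij_betw h A B" "\<forall>a\<in>A. h a = f a \<or> (h a \<in> B \<and> g (h a) = a)"
        using SB_explicit[OF f(1,2) g(1,2)] by blast
      define h' where "h' = inv_into A h"
      have h': "bij_betw h' B A" unfolding h'_def using h(1) by (rule bij_betw_inv_into)
      have hA: "h a \<in> B" if "a \<in> A" for a using h(1) that bij_betwE by blast
      have h'B: "h' b \<in> A" if "b \<in> B" for b using h' that bij_betwE by blast
      have hh': "h (h' b) = b" if "b \<in> B" for b
        unfolding h'_def using h(1) that by (meson bij_betw_inv_into_right)
      have h'h: "h' (h a) = a" if "a \<in> A" for a
        unfolding h'_def using h(1) that by (meson bij_betw_inv_into_left)
      have closeh: "finite {a\<in>A. \<epsilon> \<le> d (\<alpha> a) (\<beta> (h a))}" if \<epsilon>: "\<epsilon> > 0" for \<epsilon>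
      proof -
        have "{a\<in>A. \<epsilon> \<le> d (\<alpha> a) (\<beta> (h a))} \<subseteq>
              {a\<in>A. \<epsilon> \<le> d (\<alpha> a) (\<beta> (f a))} \<union> g ` {b\<in>B. \<epsilon> \<le> d (\<beta> b) (\<alpha> (g b))}"
        proof
          fix a assume a: "a \<in> {a\<in>A. \<epsilon> \<le> d (\<alpha> a) (\<beta> (h a))}"
          show "a \<in> {a\<in>A. \<epsilon> \<le> d (\<alpha> a) (\<beta> (f a))} \<union> g ` {b\<in>B. \<epsilon> \<le> d (\<beta> b) (\<alpha> (g b))}"
          proof (cases "h a = f a")
            case True then show ?thesis using a by simp
          next
            case False
            then have hb: "h a \<in> B" "g (h a) = a" using h(2) a by blast+
            have "d (\<beta> (h a)) (\<alpha> (g (h a))) = d (\<alpha> a) (\<beta> (h a))" using hb(2) commute by simp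
            then have "h a \<in> {b\<in>B. \<epsilon> \<le> d (\<beta> b) (\<alpha> (g b))}" using hb(1) a by simp
            then have "g (h a) \<in> g ` {b\<in>B. \<epsilon> \<le> d (\<beta> b) (\<alpha> (g b))}" by (rule imageI)
            then show ?thesis using hb(2) by simp
          qed
        qed
        moreover have "finite ({a\<in>A. \<epsilon> \<le> d (\<alpha> a) (\<beta> (f a))} \<union> g ` {b\<in>B. \<epsilon> \<le> d (\<beta> b) (\<alpha> (g b))})"
          using f(3)[OF \<epsilon>] g(3)[OF \<epsilon>] by simp
        ultimately show ?thesis by (rule finite_subset)
      qed
      have closeh': "finite {b\<in>B. \<epsilon> \<le> d (\<beta> b) (\<alpha> (h' b))}" if \<epsilon>: "\<epsilon> > 0" for \<epsilon>
      proof -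
        have "{b\<in>B. \<epsilon> \<le> d (\<beta> b) (\<alpha> (h' b))} \<subseteq> h ` {a\<in>A. \<epsilon> \<le> d (\<alpha> a) (\<beta> (h a))}"
        proof
          fix b assume b: "b \<in> {b\<in>B. \<epsilon> \<le> d (\<beta> b) (\<alpha> (h' b))}"
          then have bB: "b \<in> B" by simp
          have "d (\<alpha> (h' b)) (\<beta> (h (h' b))) = d (\<alpha> (h' b)) (\<beta> b)" using hh'[OF bB] by simp
          also have "\<dots> = d (\<beta> b) (\<alpha> (h' b))" by (rule commute)
          finally have "d (\<alpha> (h' b)) (\<beta> (h (h' b))) = d (\<beta> b) (\<alpha> (h' b))" .
          then have "h' b \<in> {a\<in>A. \<epsilon> \<le> d (\<alpha> a) (\<beta> (h a))}" using h'B[OF bB] b by simp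
          then have "h (h' b) \<in> h ` {a\<in>A. \<epsilon> \<le> d (\<alpha> a) (\<beta> (h a))}" by (rule imageI)
          then show "b \<in> h ` {a\<in>A. \<epsilon> \<le> d (\<alpha> a) (\<beta> (h a))}" using hh'[OF bB] by simp
        qed
        moreover have "finite (h ` {a\<in>A. \<epsilon> \<le> d (\<alpha> a) (\<beta> (h a))})" using closeh[OF \<epsilon>] by simp
        ultimately show ?thesis by (rule finite_subset)
      qed
      define \<phi> :: "('i \<Rightarrow> 'r) \<Rightarrow> ('j \<Rightarrow> 'r)" where "\<phi> = pull B h'"
      define \<psi> :: "('j \<Rightarrow> 'r) \<Rightarrow> ('i \<Rightarrow> 'r)" where "\<psi> = pull A h"
      have l1: "rlinear A B \<phi>" unfolding \<phi>_def by (rule pull_rlinear[OF h'])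
      have l2: "rlinear B A \<psi>" unfolding \<psi>_def by (rule pull_rlinear[OF h(1)])
      have injh': "inj_on h' B" using h' bij_betw_def by blast
      have injh: "inj_on h A" using h(1) bij_betw_def by blast
      have carr1: "carr (\<phi> (bvec a)) \<subseteq> {h a}" if a: "a \<in> A" for a
      proof -
        have "carr (\<phi> (bvec a)) \<subseteq> {b\<in>B. h' b = a}" unfolding \<phi>_def by (rule carr_pull_bvec[OF a injh'])
        also have "\<dots> \<subseteq> {h a}" using hh' by auto
        finally show ?thesis .
      qed
      have carr2: "carr (\<psi> (bvec b)) \<subseteq> {h' b}" if b: "b \<in> B" for b
      proof -
        have "carr (\<psi> (bvec b)) \<subseteq> {a\<in>A. h a = b}" unfolding \<psi>_def by (rule carr_pull_bvec[OF b injh])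
        also have "\<dots> \<subseteq> {h' b}" using h'h by auto
        finally show ?thesis .
      qed
      have hAB: "h ` A \<subseteq> B" using hA by blast
      have h'BA: "h' ` B \<subseteq> A" using h'B by blast
      have c1: "controlled_hom mtopology E A \<alpha> B \<beta> \<phi>"
        by (rule close_controlled[OF fcA bM l1 carr1 closeh hAB])
      have c2: "controlled_hom mtopology E B \<beta> A \<alpha> \<psi>"
        by (rule close_controlled[OF fcB aM l2 carr2 closeh' h'BA])
      have i1: "\<forall>x\<in>free_mod A. \<psi> (\<phi> x) = x"
        unfolding \<phi>_def \<psi>_def h'_def using pull_inv[OF h(1)] by blast
      have i2: "\<forall>y\<in>free_mod B. \<phi> (\<psi> y) = y"
        unfolding \<phi>_def \<psi>_def h'_def using pull_inv2[OF h(1)] by blast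
      show ?thesis unfolding controlled_iso_def using c1 c2 i1 i2 by blast
    qed
  qed
qed

end

theorem proposition3p2:
  fixes X :: "'x topology" and E :: "'x set"
    and A :: "'a set" and \<alpha> :: "'a \<Rightarrow> 'x"
    and B :: "'b set" and \<beta> :: "'b \<Rightarrow> 'x"
  assumes "compact_space X" and "metrizable_space X"
    and "closedin X E" and "E \<noteq> {}"
    and "X closure_of (topspace X - E) = topspace X"
    and "free_controlled X E A \<alpha>" and "free_controlled X E B \<beta>"
  shows "(controlled_iso TYPE('r::ring_1) X E A \<alpha> B \<beta> \<longleftrightarrow>
            mod_iso TYPE('r) A B \<and> fc_support X A \<alpha> = fc_support X B \<beta>)
       \<and> (fc_support X A \<alpha> \<noteq> {} \<and> fc_support X B \<beta> \<noteq> {} \<longrightarrow> mod_iso TYPE('r) A B)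
       \<and> (\<forall>K. compactin X K \<and> K \<subseteq> E \<longrightarrow>
            (\<exists>(A' :: nat set) (\<alpha>' :: nat \<Rightarrow> 'x). free_controlled X E A' \<alpha>' \<and> fc_support X A' \<alpha>' = K))"

proof -
  obtain M d where Md: "Metric_space M d" and X: "X = Metric_space.mtopology M d"
    using assms(2) unfolding metrizable_space_def by blast
  show ?thesis
    using Metric_space.main_metric[OF Md, of E A \<alpha> B \<beta>] assms(1,3,4,5,6,7) unfolding X by blast
qed

end
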